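(* Let $T$ be a rooted binary ultrametric caterpillar tree on $X$ with $|X|=n\geq 3$ and strictly positive edge lengths, let $X'\subset X$, and let $\widetilde T=T_{\widetilde X}$ with $\widetilde X=X\setminus X'$. Then for all $x_i,x_j\in\widetilde X$, $FP_T(x_i)\geq FP_T(x_j)$ implies $FP_{\widetilde T}(x_i)\geq FP_{\widetilde T}(x_j)$.
   Context: A rooted binary phylogenetic $X$-tree ($X$ finite) is a rooted tree whose root $\rho$ has in-degree 0 and out-degree 2, all edges directed away from $\rho$, all other interior vertices have in-degree 1 and out-degree 2, and whose leaves are bijectively labelled by $X$. Every edge $e$ has a strictly positive length $\lambda_e$. The tree is ultrametric if the sum of edge lengths on the path from the root to every leaf is the same. A cherry is a pair of leaves with the same parent; a caterpillar tree has exactly one cherry. The Fair Proportion index of $x\in X$ is $FP_T(x)=\sum_{e\in P(T;\rho,x)}\lambda_e/D_e$, where $P(T;\rho,x)$ is the path from $\rho$ to $x$ and $D_e$ is the number of leaves descended from $e$. For $Y\subseteq X$, the induced subtree $T_Y$ is obtained from the minimal subtree of $T$ connecting $Y$ by suppressing all non-root vertices of in- and out-degree 1, adding the lengths of merged edges; if the root then has out-degree 1, it and its incident edge are deleted. *)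

theory Defs
  imports Main "HOL.Real"
begin

text \<open>A tree is either a
single leaf, or an interior vertex with exactly two children; each child is
paired with the length of the edge from the vertex to that child.\<close>

datatype 'a ptree = Leaf 'a | Node "real \<times> 'a ptree" "real \<times> 'a ptree"

fun leaf_list :: "'a ptree \<Rightarrow> 'a list" where
  "leaf_list (Leaf x) = [x]"
| "leaf_list (Node (l1, t1) (l2, t2)) = leaf_list t1 @ leaf_list t2"

definition leaves :: "'a ptree \<Rightarrow> 'a set" where
  "leaves t = set (leaf_list t)"

definition well_labelled :: "'a ptree \<Rightarrow> bool" where
  "well_labelled t = distinct (leaf_list t)"

fun pos_lengths :: "'a ptree \<Rightarrow> bool" where
  "pos_lengths (Leaf x) = True"
| "pos_lengths (Node (l1, t1) (l2, t2)) =
     (l1 > 0 \<and> l2 > 0 \<and> pos_lengths t1 \<and> pos_lengths t2)"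

fun root_dist :: "'a ptree \<Rightarrow> 'a \<Rightarrow> real" where
  "root_dist (Leaf y) x = 0"
| "root_dist (Node (l1, t1) (l2, t2)) x =
     (if x \<in> leaves t1 then l1 + root_dist t1 x
      else if x \<in> leaves t2 then l2 + root_dist t2 x else 0)"

definition ultrametric :: "'a ptree \<Rightarrow> bool" where
  "ultrametric t = (\<exists>c. \<forall>x \<in> leaves t. root_dist t x = c)"

fun num_cherries :: "'a ptree \<Rightarrow> nat" where
  "num_cherries (Leaf x) = 0"
| "num_cherries (Node (l1, Leaf a) (l2, Leaf b)) = 1"
| "num_cherries (Node (l1, t1) (l2, t2)) = num_cherries t1 + num_cherries t2"

definition caterpillar :: "'a ptree \<Rightarrow> bool" where
  "caterpillar t = (num_cherries t = 1)"

text \<open>Fair Proportion index: sum over edges e on the root-to-x path of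
lambda_e / D_e, where D_e is the number of leaves below e.\<close>
fun FP :: "'a ptree \<Rightarrow> 'a \<Rightarrow> real" where
  "FP (Leaf y) x = 0"
| "FP (Node (l1, t1) (l2, t2)) x =
     (if x \<in> leaves t1 then l1 / real (card (leaves t1)) + FP t1 x
      else if x \<in> leaves t2 then l2 / real (card (leaves t2)) + FP t2 x else 0)"

text \<open>Result: None if no leaf of Y is below; otherwise
Some (d, s) where s is the induced subtree (rooted at the most recent common
ancestor of the Y-leaves below) and d is the total length of the edges below the
current vertex that get merged into the edge entering it by suppression of
vertices with in- and out-degree 1.\<close>
fun restr :: "'a set \<Rightarrow> 'a ptree \<Rightarrow> (real \<times> 'a ptree) option" where
  "restr Y (Leaf x) = (if x \<in> Y then Some (0, Leaf x) else None)"
| "restr Y (Node (l1, t1) (l2, t2)) =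
     (case (restr Y t1, restr Y t2) of
        (Some (d1, s1), Some (d2, s2)) \<Rightarrow> Some (0, Node (l1 + d1, s1) (l2 + d2, s2))
      | (Some (d1, s1), None) \<Rightarrow> Some (l1 + d1, s1)
      | (None, Some (d2, s2)) \<Rightarrow> Some (l2 + d2, s2)
      | (None, None) \<Rightarrow> None)"

text \<open>Induced subtree T_Y: at the top level a root of out-degree 1 is deleted
together with its incident edge, i.e. the accumulated length is discarded.\<close>
definition induced :: "'a set \<Rightarrow> 'a ptree \<Rightarrow> 'a ptree" where
  "induced Y t = (case restr Y t of Some (d, s) \<Rightarrow> s | None \<Rightarrow> undefined)"

end

theory Submission
  imports Defs
begin

inductive cat :: "'a ptree \<Rightarrow> bool" where
  cL: "cat (Leaf x)"
| cA: "cat s \<Longrightarrow> cat (Node (l1, Leaf a) (l2, s))"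
| cB: "cat s \<Longrightarrow> cat (Node (l1, s) (l2, Leaf a))"

lemma nc_pos: "(case t of Leaf _ \<Rightarrow> 0 | _ \<Rightarrow> 1) \<le> num_cherries t"
  by (induction t rule: num_cherries.induct) auto

lemma nc_node: "1 \<le> num_cherries (Node p q)"
  using nc_pos[of "Node p q"] by simp

lemma nc0: "num_cherries t = 0 \<Longrightarrow> \<exists>x. t = Leaf x"
  using nc_pos[of t] by (cases t) auto

lemma nc_cat: "num_cherries t \<le> 1 \<Longrightarrow> cat t"
  apply (induction t rule: num_cherries.induct)
  apply (auto intro: cat.intros)
  subgoal for l1 a b aa ba l2 t2
    using nc_node[of "(a,b)" "(aa,ba)"] nc0[of t2] by (auto intro: cat.intros)
  subgoal for l1 t1 l2 a b aa ba
    using nc_node[of "(a,b)" "(aa,ba)"] nc0[of t1] by (auto intro: cat.intros)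
  done

lemma leaves_simps[simp]: "leaves (Leaf x) = {x}"
  "leaves (Node (l1,t1) (l2,t2)) = leaves t1 \<union> leaves t2"
  by (auto simp: leaves_def)

lemma leaves_ne: "leaves t \<noteq> {}"
  by (induction t rule: leaf_list.induct) auto

lemma leaves_fin[simp]: "finite (leaves t)"
  by (simp add: leaves_def)

lemma H0: "y \<in> Y \<Longrightarrow> y \<in> leaves t \<Longrightarrow> restr Y t \<noteq> None"
  by (induction Y t rule: restr.induct) (auto split: option.splits)

lemma H1: "restr Y t = Some (d, s') \<Longrightarrow> leaves s' = leaves t \<inter> Y"
  by (induction Y t arbitrary: d s' rule: restr.induct)
     (auto split: option.splits if_splits dest: H0)

lemma dist_simps[simp]: "distinct (leaf_list (Node (l1,t1) (l2,t2))) \<longleftrightarrow>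
   distinct (leaf_list t1) \<and> distinct (leaf_list t2) \<and> leaves t1 \<inter> leaves t2 = {}"
  by (auto simp: leaves_def)

lemma H2: "restr Y t = Some (d, s') \<Longrightarrow> distinct (leaf_list t) \<Longrightarrow> z \<in> leaves s'
  \<Longrightarrow> root_dist t z = d + root_dist s' z"
proof (induction Y t arbitrary: d s' rule: restr.induct)
  case (1 Y x)
  then show ?case by (auto split: if_splits)
next
  case (2 Y l1 t1 l2 t2)
  show ?case
  proof (cases "restr Y t1")
    case None
    then show ?thesis using 2 H1[of Y t2] H0[of z Y t1]
      by (auto split: option.splits)
  next
    case (Some a)
    then obtain d1 s1 where a: "restr Y t1 = Some (d1, s1)" by (cases a) auto
    show ?thesis
    proof (cases "restr Y t2")
      case None
      then show ?thesis using 2 a H1[of Y t1] by (auto split: option.splits)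
    next
      case (Some b)
      then obtain d2 s2 where b: "restr Y t2 = Some (d2, s2)" by (cases b) auto
      show ?thesis using 2 a b H1[of Y t1] H1[of Y t2] by (auto split: option.splits)
    qed
  qed
qed

lemma H3: "restr Y t = Some (d, s') \<Longrightarrow> pos_lengths t \<Longrightarrow> pos_lengths s' \<and> d \<ge> 0"
  by (induction Y t arbitrary: d s' rule: restr.induct)
     (auto split: option.splits if_splits)

lemma card_ge1: "1 \<le> card (leaves t)"
  using leaves_ne[of t] leaves_fin[of t] by (simp add: Suc_le_eq card_gt_0_iff)

lemma card_node: "distinct (leaf_list (Node (l1,t1) (l2,t2))) \<Longrightarrow> 2 \<le> card (leaves (Node (l1,t1) (l2,t2)))"
proof -
  assume a: "distinct (leaf_list (Node (l1,t1) (l2,t2)))"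
  have "leaves t1 \<inter> leaves t2 = {}" using a by (simp add: leaves_def)
  then show ?thesis using card_ge1[of t1] card_ge1[of t2] by (simp add: card_Un_disjoint)
qed

lemma H4: "pos_lengths t \<Longrightarrow> FP t y \<le> root_dist t y"
proof (induction t y rule: FP.induct)
  case (2 l1 t1 l2 t2 x)
  have c1: "l1 / real (card (leaves t1)) \<le> l1"
    using card_ge1[of t1] 2(3) by (simp add: divide_le_eq)
  have c2: "l2 / real (card (leaves t2)) \<le> l2"
    using card_ge1[of t2] 2(3) by (simp add: divide_le_eq)
  show ?case using 2 c1 c2 by auto
qed auto

lemma M: "cat t \<Longrightarrow> distinct (leaf_list t) \<Longrightarrow> pos_lengths t \<Longrightarrow>
  \<forall>z\<in>leaves t. root_dist t z = h \<Longrightarrow> restr Y t = Some (d, s') \<Longrightarrow>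
  x \<in> Y \<Longrightarrow> y \<in> Y \<Longrightarrow> x \<in> leaves t \<Longrightarrow> y \<in> leaves t \<Longrightarrow>
  FP t y \<le> FP t x \<Longrightarrow> FP s' y \<le> FP s' x"
proof (induction t arbitrary: h d s' rule: cat.induct)
  case (cL z)
  then show ?case by simp
next
  case (cA s l1 a l2)
  let ?t = "Node (l1, Leaf a) (l2, s)"
  have an: "a \<notin> leaves s" and ds: "distinct (leaf_list s)" using cA.prems(1) by (auto simp: leaves_def)
  have l1p: "l1 > 0" and l2p: "l2 > 0" and ps: "pos_lengths s" using cA.prems(2) by auto
  have "a \<in> leaves ?t" by simp
  then have "root_dist ?t a = h" using cA.prems(3) by blast
  then have ha: "l1 = h" using an by simp
  have hs: "\<forall>z\<in>leaves s. root_dist s z = h - l2"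
  proof
    fix z assume z: "z \<in> leaves s"
    then have "z \<noteq> a" using an by auto
    moreover have "z \<in> leaves ?t" using z by simp
    then have "root_dist ?t z = h" using cA.prems(3) by blast
    ultimately show "root_dist s z = h - l2" using z by simp
  qed
  have FPs: "\<And>z. z \<in> leaves s \<Longrightarrow> FP ?t z = l2 / real (card (leaves s)) + FP s z"
    using an by auto
  have FPa: "FP ?t a = l1" using an by simp
  have ps': "pos_lengths s'" using H3[OF cA.prems(4) cA.prems(2)] by simp
  have rd': "\<And>z. z \<in> leaves s' \<Longrightarrow> root_dist s' z = h - d"
    using H2[OF cA.prems(4) cA.prems(1)] cA.prems(3) H1[OF cA.prems(4)] by fastforce
  show ?case
  proof (cases "x = y")
    case True then show ?thesis by simp
  next
    case xy: False
    show ?thesis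
    proof (cases "x = a")
      case xa: True
      then have yS: "y \<in> leaves s" using xy cA.prems(8) by auto
      obtain d2 s2 where r2: "restr Y s = Some (d2, s2)"
        using H0[OF cA.prems(6) yS] by auto
      have aY: "a \<in> Y" using xa cA.prems(5) by simp
      have s'e: "s' = Node (l1, Leaf a) (l2 + d2, s2)" and d0: "d = 0"
        using cA.prems(4) r2 aY by auto
      have "FP s' y \<le> root_dist s' y" using H4[OF ps'] .
      also have "\<dots> = h" using rd'[of y] d0 H1[OF cA.prems(4)] cA.prems(6,8) by auto
      also have "\<dots> = FP s' x" using s'e xa ha H1[OF r2] an by simp
      finally show ?thesis .
    next
      case xa: False
      then have xS: "x \<in> leaves s" using cA.prems(7) by auto
      show ?thesis
      proof (cases "y = a")
        case ya: True
        show ?thesis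
        proof (cases s)
          case (Leaf b)
          then have xb: "x = b" using xS by simp
          have s'e: "s' = Node (l1, Leaf a) (l2, Leaf b)"
            using cA.prems(4) Leaf xb ya cA.prems(5,6) by auto
          have "l2 = h" using hs Leaf by simp
          then show ?thesis using s'e ya xb ha xa by simp
        next
          case (Node p q)
          then obtain lp tp lq tq where pq: "s = Node (lp, tp) (lq, tq)" by (cases p, cases q) auto
          have c2: "2 \<le> card (leaves s)" using card_node ds pq by blast
          have "l2 / real (card (leaves s)) \<le> l2 / 2"
            using c2 l2p by (intro divide_left_mono) simp_all
          moreover have "FP s x \<le> h - l2" using H4[OF ps, of x] hs xS by auto
          ultimately have "FP ?t x < h" using FPs[OF xS] l2p by linarith
          then have False using cA.prems(9) ya FPa ha by simp
          then show ?thesis ..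
        qed
      next
        case ya: False
        then have yS: "y \<in> leaves s" using cA.prems(8) by auto
        have le: "FP s y \<le> FP s x" using cA.prems(9) FPs[OF xS] FPs[OF yS] by simp
        obtain d2 s2 where r2: "restr Y s = Some (d2, s2)"
          using H0[OF cA.prems(6) yS] by auto
        have IH: "FP s2 y \<le> FP s2 x"
          using cA.IH[OF ds ps hs r2 cA.prems(5,6) xS yS le] .
        have l2s: "x \<in> leaves s2" "y \<in> leaves s2" using H1[OF r2] xS yS cA.prems(5,6) by auto
        show ?thesis
        proof (cases "a \<in> Y")
          case True
          then have "s' = Node (l1, Leaf a) (l2 + d2, s2)" using cA.prems(4) r2 by auto
          then show ?thesis using IH l2s xa ya by simp
        next
          case False
          then have "s' = s2" using cA.prems(4) r2 by auto
          then show ?thesis using IH by simp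
        qed
      qed
    qed
  qed
next
  case (cB s l2 l1 a)
  let ?t = "Node (l2, s) (l1, Leaf a)"
  have an: "a \<notin> leaves s" and ds: "distinct (leaf_list s)" using cB.prems(1) by (auto simp: leaves_def)
  have l1p: "l1 > 0" and l2p: "l2 > 0" and ps: "pos_lengths s" using cB.prems(2) by auto
  have "a \<in> leaves ?t" by simp
  then have "root_dist ?t a = h" using cB.prems(3) by blast
  then have ha: "l1 = h" using an by simp
  have hs: "\<forall>z\<in>leaves s. root_dist s z = h - l2"
  proof
    fix z assume z: "z \<in> leaves s"
    then have "z \<noteq> a" using an by auto
    moreover have "z \<in> leaves ?t" using z by simp
    then have "root_dist ?t z = h" using cB.prems(3) by blast
    ultimately show "root_dist s z = h - l2" using z by simp
  qed
  have FPs: "\<And>z. z \<in> leaves s \<Longrightarrow> FP ?t z = l2 / real (card (leaves s)) + FP s z"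
    using an by auto
  have FPa: "FP ?t a = l1" using an by simp
  have ps': "pos_lengths s'" using H3[OF cB.prems(4) cB.prems(2)] by simp
  have rd': "\<And>z. z \<in> leaves s' \<Longrightarrow> root_dist s' z = h - d"
    using H2[OF cB.prems(4) cB.prems(1)] cB.prems(3) H1[OF cB.prems(4)] by fastforce
  show ?case
  proof (cases "x = y")
    case True then show ?thesis by simp
  next
    case xy: False
    show ?thesis
    proof (cases "x = a")
      case xa: True
      then have yS: "y \<in> leaves s" using xy cB.prems(8) by auto
      obtain d2 s2 where r2: "restr Y s = Some (d2, s2)"
        using H0[OF cB.prems(6) yS] by auto
      have aY: "a \<in> Y" using xa cB.prems(5) by simp
      have s'e: "s' = Node (l2 + d2, s2) (l1, Leaf a)" and d0: "d = 0"
        using cB.prems(4) r2 aY by auto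
      have "FP s' y \<le> root_dist s' y" using H4[OF ps'] .
      also have "\<dots> = h" using rd'[of y] d0 H1[OF cB.prems(4)] cB.prems(6,8) by auto
      also have "\<dots> = FP s' x" using s'e xa ha H1[OF r2] an by simp
      finally show ?thesis .
    next
      case xa: False
      then have xS: "x \<in> leaves s" using cB.prems(7) by auto
      show ?thesis
      proof (cases "y = a")
        case ya: True
        show ?thesis
        proof (cases s)
          case (Leaf b)
          then have xb: "x = b" using xS by simp
          have s'e: "s' = Node (l2, Leaf b) (l1, Leaf a)"
            using cB.prems(4) Leaf xb ya cB.prems(5,6) by auto
          have "l2 = h" using hs Leaf by simp
          then show ?thesis using s'e ya xb ha xa by simp
        next
          case (Node p q)
          then obtain lp tp lq tq where pq: "s = Node (lp, tp) (lq, tq)" by (cases p, cases q) auto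
          have c2: "2 \<le> card (leaves s)" using card_node ds pq by blast
          have "l2 / real (card (leaves s)) \<le> l2 / 2"
            using c2 l2p by (intro divide_left_mono) simp_all
          moreover have "FP s x \<le> h - l2" using H4[OF ps, of x] hs xS by auto
          ultimately have "FP ?t x < h" using FPs[OF xS] l2p by linarith
          then have False using cB.prems(9) ya FPa ha by simp
          then show ?thesis ..
        qed
      next
        case ya: False
        then have yS: "y \<in> leaves s" using cB.prems(8) by auto
        have le: "FP s y \<le> FP s x" using cB.prems(9) FPs[OF xS] FPs[OF yS] by simp
        obtain d2 s2 where r2: "restr Y s = Some (d2, s2)"
          using H0[OF cB.prems(6) yS] by auto
        have IH: "FP s2 y \<le> FP s2 x"
          using cB.IH[OF ds ps hs r2 cB.prems(5,6) xS yS le] .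
        have l2s: "x \<in> leaves s2" "y \<in> leaves s2" using H1[OF r2] xS yS cB.prems(5,6) by auto
        show ?thesis
        proof (cases "a \<in> Y")
          case True
          then have "s' = Node (l2 + d2, s2) (l1, Leaf a)" using cB.prems(4) r2 by auto
          then show ?thesis using IH l2s xa ya by simp
        next
          case False
          then have "s' = s2" using cB.prems(4) r2 by auto
          then show ?thesis using IH by simp
        qed
      qed
    qed
  qed
qed


theorem proposition1:
  fixes T :: "'a ptree" and X X' :: "'a set" and xi xj :: 'a
  assumes "well_labelled T"
    and "X = leaves T"
    and "card X \<ge> 3"
    and "pos_lengths T"
    and "ultrametric T"
    and "caterpillar T"
    and "X' \<subseteq> X"
    and "xi \<in> X - X'" and "xj \<in> X - X'"
    and "FP T xi \<ge> FP T xj"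
  shows "FP (induced (X - X') T) xi \<ge> FP (induced (X - X') T) xj"
proof -
  have c: "cat T" using assms(6) by (intro nc_cat) (simp add: caterpillar_def)
  obtain h where h: "\<forall>z\<in>leaves T. root_dist T z = h" using assms(5) by (auto simp: ultrametric_def)
  have xl: "xi \<in> leaves T" "xj \<in> leaves T" using assms(2,8,9) by auto
  obtain d s' where r: "restr (X - X') T = Some (d, s')"
    using H0[OF assms(8) xl(1)] by auto
  have "FP s' xj \<le> FP s' xi"
    using M[OF c _ assms(4) h r assms(8,9) xl assms(10)] assms(1) by (simp add: well_labelled_def)
  then show ?thesis using r by (simp add: induced_def)
qed

end
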